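(* Let $T$ be a complete first-order theory with monster model $\mathcal{U}$, $A\subseteq\mathcal{U}$ small, $\mu\in\mathfrak{M}_x(\mathcal{U})$, and $f:\mathcal{U}^x\to\mathcal{U}^y$ an $A$-definable function. Then $\mu\geq_{\mathbb{E},A} f(\mu)$.
   Context: For $B\subseteq\mathcal{U}$, $\mathcal{L}_x(B)$ is the Boolean algebra of formulas in $x$ with parameters from $B$ modulo $T$, identified with a subalgebra of $\mathcal{L}_{xy}(B)$ via $\varphi(x)\mapsto\varphi(x)\wedge y=y$; $\mathfrak{M}_x(B)$ is the set of finitely additive probability measures (Keisler measures) on $\mathcal{L}_x(B)$. For $\omega\in\mathfrak{M}_{xy}(B)$, $\pi_x(\omega)(\varphi(x))=\omega(\varphi(x)\wedge y=y)$ (similarly $\pi_y$); $\omega|_C$ is restriction to $\mathcal{L}_{xy}(C)$. The push-forward $f(\mu)\in\mathfrak{M}_y(\mathcal{U})$ is $f(\mu)(\psi(y))=\mu(\psi(f(x)))$. For $\mu\in\mathfrak{M}_x(\mathcal{U})$, $\nu\in\mathfrak{M}_y(\mathcal{U})$ ($x,y$ disjoint) and small $A$: $\mu\geq_{\mathbb{E},A}\nu$ means there is $\lambda\in\mathfrak{M}_{xy}(A)$ with $\pi_x(\lambda)=\mu|_A$ such that every $\omega\in\mathfrak{M}_{xy}(\mathcal{U})$ with $\omega|_A=\lambda$ and $\pi_x(\omega)=\mu$ satisfies $\pi_y(\omega)=\nu$. *)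

theory Defs
  imports Complex_Main
begin

datatype ('f, 'a) trm = Var nat | Par 'a | App 'f "('f, 'a) trm list"

datatype ('f, 'r, 'a) fm =
    FEq "('f, 'a) trm" "('f, 'a) trm"
  | FRel 'r "('f, 'a) trm list"
  | FNeg "('f, 'r, 'a) fm"
  | FConj "('f, 'r, 'a) fm" "('f, 'r, 'a) fm"
  | FEx nat "('f, 'r, 'a) fm"

text \<open>A structure with universe UNIV :: 'a set: interpretations of the
function and relation symbols.\<close>
type_synonym ('f, 'r, 'a) struc = "('f \<Rightarrow> 'a list \<Rightarrow> 'a) \<times> ('r \<Rightarrow> 'a list \<Rightarrow> bool)"

fun eval_trm :: "('f \<Rightarrow> 'a list \<Rightarrow> 'a) \<Rightarrow> (nat \<Rightarrow> 'a) \<Rightarrow> ('f, 'a) trm \<Rightarrow> 'a" where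
  "eval_trm F v (Var i) = v i"
| "eval_trm F v (Par a) = a"
| "eval_trm F v (App f ts) = F f (map (eval_trm F v) ts)"

fun sat :: "('f, 'r, 'a) struc \<Rightarrow> (nat \<Rightarrow> 'a) \<Rightarrow> ('f, 'r, 'a) fm \<Rightarrow> bool" where
  "sat M v (FEq s t) = (eval_trm (fst M) v s = eval_trm (fst M) v t)"
| "sat M v (FRel r ts) = snd M r (map (eval_trm (fst M) v) ts)"
| "sat M v (FNeg \<phi>) = (\<not> sat M v \<phi>)"
| "sat M v (FConj \<phi> \<psi>) = (sat M v \<phi> \<and> sat M v \<psi>)"
| "sat M v (FEx i \<phi>) = (\<exists>a. sat M (v(i := a)) \<phi>)"

fun fv_trm :: "('f, 'a) trm \<Rightarrow> nat set" where
  "fv_trm (Var i) = {i}"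
| "fv_trm (Par a) = {}"
| "fv_trm (App f ts) = (\<Union>t\<in>set ts. fv_trm t)"

fun fv :: "('f, 'r, 'a) fm \<Rightarrow> nat set" where
  "fv (FEq s t) = fv_trm s \<union> fv_trm t"
| "fv (FRel r ts) = (\<Union>t\<in>set ts. fv_trm t)"
| "fv (FNeg \<phi>) = fv \<phi>"
| "fv (FConj \<phi> \<psi>) = fv \<phi> \<union> fv \<psi>"
| "fv (FEx i \<phi>) = fv \<phi> - {i}"

fun params_trm :: "('f, 'a) trm \<Rightarrow> 'a set" where
  "params_trm (Var i) = {}"
| "params_trm (Par a) = {a}"
| "params_trm (App f ts) = (\<Union>t\<in>set ts. params_trm t)"

fun params :: "('f, 'r, 'a) fm \<Rightarrow> 'a set" where
  "params (FEq s t) = params_trm s \<union> params_trm t"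
| "params (FRel r ts) = (\<Union>t\<in>set ts. params_trm t)"
| "params (FNeg \<phi>) = params \<phi>"
| "params (FConj \<phi> \<psi>) = params \<phi> \<union> params \<psi>"
| "params (FEx i \<phi>) = params \<phi>"

text \<open>Smallness relative to the saturation cardinal, given as the cardinality of a set K.\<close>
definition small :: "'k set \<Rightarrow> 'a set \<Rightarrow> bool" where
  "small K A \<longleftrightarrow> ordLess2 (card_of A) (card_of K)"

definition saturated :: "('f, 'r, 'a) struc \<Rightarrow> 'k set \<Rightarrow> bool" where
  "saturated M K \<longleftrightarrow>
     (\<forall>A p. small K A \<and> (\<forall>\<phi>\<in>p. params \<phi> \<subseteq> A \<and> fv \<phi> \<subseteq> {0}) \<and>
        (\<forall>q. q \<subseteq> p \<and> finite q \<longrightarrow> (\<exists>a. \<forall>\<phi>\<in>q. sat M (\<lambda>_. a) \<phi>))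
      \<longrightarrow> (\<exists>a. \<forall>\<phi>\<in>p. sat M (\<lambda>_. a) \<phi>))"

definition automorphism :: "('f, 'r, 'a) struc \<Rightarrow> ('a \<Rightarrow> 'a) \<Rightarrow> bool" where
  "automorphism M \<sigma> \<longleftrightarrow> bij \<sigma> \<and>
     (\<forall>f as. \<sigma> (fst M f as) = fst M f (map \<sigma> as)) \<and>
     (\<forall>r as. snd M r as = snd M r (map \<sigma> as))"

definition partial_elementary :: "('f, 'r, 'a) struc \<Rightarrow> 'a set \<Rightarrow> ('a \<Rightarrow> 'a) \<Rightarrow> bool" where
  "partial_elementary M A h \<longleftrightarrow>
     (\<forall>\<phi> :: ('f, 'r, 'a) fm. \<forall>v. params \<phi> \<subseteq> A \<and> fv \<phi> = {} \<longrightarrow>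
        (sat M v \<phi> \<longleftrightarrow> sat M v (map_fm id id h \<phi>)))"

definition strongly_homogeneous :: "('f, 'r, 'a) struc \<Rightarrow> 'k set \<Rightarrow> bool" where
  "strongly_homogeneous M K \<longleftrightarrow>
     (\<forall>A h. small K A \<and> partial_elementary M A h \<longrightarrow>
        (\<exists>\<sigma>. automorphism M \<sigma> \<and> (\<forall>a\<in>A. \<sigma> a = h a)))"

text \<open>A monster model: kappa-saturated and strongly kappa-homogeneous, kappa = |K|
infinite and larger than the language. T is its complete theory.\<close>
definition monster :: "('f, 'r, 'a) struc \<Rightarrow> 'k set \<Rightarrow> bool" where
  "monster M K \<longleftrightarrow> infinite K \<and> ordLess2 (card_of (UNIV :: ('f + 'r) set)) (card_of K) \<and>
     saturated M K \<and> strongly_homogeneous M K"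

text \<open>Elements of L_x(B) for an n-tuple of variables x (variables 0..n-1),
represented by the subsets of U^n they define (formulas modulo T with
parameters from B are identified exactly when they define the same set in U).\<close>
definition defset :: "('f, 'r, 'a) struc \<Rightarrow> nat \<Rightarrow> 'a set \<Rightarrow> 'a list set \<Rightarrow> bool" where
  "defset M n B D \<longleftrightarrow> (\<exists>\<phi> :: ('f, 'r, 'a) fm. params \<phi> \<subseteq> B \<and> fv \<phi> \<subseteq> {..<n} \<and>
       D = {as. length as = n \<and> sat M (\<lambda>i. as ! i) \<phi>})"

definition keisler :: "('f, 'r, 'a) struc \<Rightarrow> nat \<Rightarrow> 'a set \<Rightarrow> ('a list set \<Rightarrow> real) \<Rightarrow> bool" where
  "keisler M n B \<mu> \<longleftrightarrow>
     (\<forall>D. defset M n B D \<longrightarrow> 0 \<le> \<mu> D) \<and>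
     \<mu> {as. length as = n} = 1 \<and>
     (\<forall>D E. defset M n B D \<and> defset M n B E \<and> D \<inter> E = {} \<longrightarrow> \<mu> (D \<union> E) = \<mu> D + \<mu> E)"

definition pi_x :: "nat \<Rightarrow> nat \<Rightarrow> ('a list set \<Rightarrow> real) \<Rightarrow> 'a list set \<Rightarrow> real" where
  "pi_x n m \<omega> D = \<omega> {as @ bs | as bs. as \<in> D \<and> length bs = m}"

definition pi_y :: "nat \<Rightarrow> nat \<Rightarrow> ('a list set \<Rightarrow> real) \<Rightarrow> 'a list set \<Rightarrow> real" where
  "pi_y n m \<omega> E = \<omega> {as @ bs | as bs. length as = n \<and> bs \<in> E}"

definition deffun :: "('f, 'r, 'a) struc \<Rightarrow> nat \<Rightarrow> nat \<Rightarrow> 'a set \<Rightarrow> ('a list \<Rightarrow> 'a list) \<Rightarrow> bool" where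
  "deffun M n m A f \<longleftrightarrow> (\<forall>as. length as = n \<longrightarrow> length (f as) = m) \<and>
     defset M (n + m) A {as @ f as | as. length as = n}"

definition pushforward :: "nat \<Rightarrow> ('a list \<Rightarrow> 'a list) \<Rightarrow> ('a list set \<Rightarrow> real) \<Rightarrow> 'a list set \<Rightarrow> real" where
  "pushforward n f \<mu> E = \<mu> {as. length as = n \<and> f as \<in> E}"

definition geqE :: "('f, 'r, 'a) struc \<Rightarrow> nat \<Rightarrow> nat \<Rightarrow> 'a set \<Rightarrow>
    ('a list set \<Rightarrow> real) \<Rightarrow> ('a list set \<Rightarrow> real) \<Rightarrow> bool" where
  "geqE M n m A \<mu> \<nu> \<longleftrightarrow>
     (\<exists>lam. keisler M (n + m) A lam \<and>
        (\<forall>D. defset M n A D \<longrightarrow> pi_x n m lam D = \<mu> D) \<and>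
        (\<forall>\<omega>. keisler M (n + m) UNIV \<omega> \<and>
              (\<forall>D. defset M (n + m) A D \<longrightarrow> \<omega> D = lam D) \<and>
              (\<forall>D. defset M n UNIV D \<longrightarrow> pi_x n m \<omega> D = \<mu> D)
           \<longrightarrow> (\<forall>E. defset M m UNIV E \<longrightarrow> pi_y n m \<omega> E = \<nu> E)))"

end

theory Submission
  imports Defs
begin

lemma eval_cong: "(\<forall>i\<in>fv_trm t. v i = w i) \<Longrightarrow> eval_trm F v t = eval_trm F w t"
proof (induction t)
  case (App g ts)
  have "map (eval_trm F v) ts = map (eval_trm F w) ts"
    using App by (auto simp: map_eq_conv)
  then show ?case by (simp only: eval_trm.simps)
qed auto

lemma sat_cong: "(\<forall>i\<in>fv \<phi>. v i = w i) \<Longrightarrow> sat M v \<phi> = sat M w \<phi>"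
proof (induction \<phi> arbitrary: v w)
  case (FEq s t) then show ?case using eval_cong[of s v w] eval_cong[of t v w] by auto
next
  case (FRel r ts)
  have "map (eval_trm (fst M) v) ts = map (eval_trm (fst M) w) ts"
    using FRel by (auto simp: map_eq_conv intro!: eval_cong)
  then show ?case by (simp only: sat.simps)
next
  case (FEx i \<phi>)
  have "\<And>a. sat M (v(i:=a)) \<phi> = sat M (w(i:=a)) \<phi>"
    using FEx.prems by (intro FEx.IH) auto
  then show ?case by simp
next
  case (FConj \<phi> \<psi>)
  have "sat M v \<phi> = sat M w \<phi>" using FConj.IH(1) FConj.prems by auto
  moreover have "sat M v \<psi> = sat M w \<psi>" using FConj.IH(2) FConj.prems by auto
  ultimately show ?case by simp
qed auto

fun rn_trm :: "(nat \<Rightarrow> nat) \<Rightarrow> ('f, 'a) trm \<Rightarrow> ('f, 'a) trm" where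
  "rn_trm g (Var i) = Var (g i)"
| "rn_trm g (Par a) = Par a"
| "rn_trm g (App f ts) = App f (map (rn_trm g) ts)"

fun rn :: "(nat \<Rightarrow> nat) \<Rightarrow> ('f, 'r, 'a) fm \<Rightarrow> ('f, 'r, 'a) fm" where
  "rn g (FEq s t) = FEq (rn_trm g s) (rn_trm g t)"
| "rn g (FRel r ts) = FRel r (map (rn_trm g) ts)"
| "rn g (FNeg \<phi>) = FNeg (rn g \<phi>)"
| "rn g (FConj \<phi> \<psi>) = FConj (rn g \<phi>) (rn g \<psi>)"
| "rn g (FEx i \<phi>) = FEx (g i) (rn g \<phi>)"

lemma eval_rn: "eval_trm F v (rn_trm g t) = eval_trm F (v \<circ> g) t"
proof (induction t)
  case (App h ts)
  have "map (eval_trm F v \<circ> rn_trm g) ts = map (eval_trm F (v \<circ> g)) ts"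
    using App by (auto simp: map_eq_conv comp_def)
  then show ?case by (simp only: rn_trm.simps eval_trm.simps map_map)
qed auto

lemma fv_rn_trm: "fv_trm (rn_trm g t) = g ` fv_trm t"
  by (induction t) auto

lemma params_rn_trm: "params_trm (rn_trm g t) = params_trm t"
  by (induction t) auto

lemma fv_rn: "inj g \<Longrightarrow> fv (rn g \<phi>) = g ` fv \<phi>"
  by (induction \<phi>) (auto simp: fv_rn_trm inj_def)

lemma params_rn: "params (rn g \<phi>) = params \<phi>"
  by (induction \<phi>) (auto simp: params_rn_trm)

lemma sat_rn: "inj g \<Longrightarrow> sat M v (rn g \<phi>) = sat M (v \<circ> g) \<phi>"
proof (induction \<phi> arbitrary: v)
  case (FEx i \<phi>)
  have h: "\<And>a. (v(g i := a)) \<circ> g = (v \<circ> g)(i := a)"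
    using FEx.prems by (auto simp: inj_def)
  show ?case by (simp only: sat.simps rn.simps FEx.IH[OF FEx.prems] h)
qed (auto simp: eval_rn comp_def)

lemma defset_len: "defset M k B D \<Longrightarrow> cs \<in> D \<Longrightarrow> length cs = k"
  unfolding defset_def by auto

lemma defset_mono: "defset M k B D \<Longrightarrow> B \<subseteq> C \<Longrightarrow> defset M k C D"
  unfolding defset_def by blast

lemma defset_univ: "defset M k B {cs. length cs = k}"
  unfolding defset_def
  by (rule exI[of _ "FEx 0 (FEq (Var 0) (Var 0))"]) auto

lemma defset_int: "defset M k B D \<Longrightarrow> defset M k B E \<Longrightarrow> defset M k B (D \<inter> E)"
  unfolding defset_def
  apply (elim exE conjE)
  subgoal for \<phi> \<psi> by (rule exI[of _ "FConj \<phi> \<psi>"]) auto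
  done

lemma defset_compl: "defset M k B D \<Longrightarrow> defset M k B ({cs. length cs = k} - D)"
  unfolding defset_def
  apply (elim exE conjE)
  subgoal for \<phi> by (rule exI[of _ "FNeg \<phi>"]) auto
  done

lemma defset_diff: "defset M k B D \<Longrightarrow> defset M k B E \<Longrightarrow> defset M k B (D - E)"
proof -
  assume d: "defset M k B D" and e: "defset M k B E"
  have "D - E = D \<inter> ({cs. length cs = k} - E)" using defset_len[OF d] by auto
  then show ?thesis using defset_int[OF d defset_compl[OF e]] by simp
qed

lemma defset_ex1:
  assumes "defset M (Suc k) B D"
  shows "defset M k B {cs. length cs = k \<and> (\<exists>b. cs @ [b] \<in> D)}"
proof -
  obtain \<phi> where p: "params \<phi> \<subseteq> B" "fv \<phi> \<subseteq> {..<Suc k}"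
    and D: "D = {as. length as = Suc k \<and> sat M (\<lambda>i. as ! i) \<phi>}"
    using assms unfolding defset_def by blast
  have "{cs. length cs = k \<and> (\<exists>b. cs @ [b] \<in> D)} =
        {cs. length cs = k \<and> sat M (\<lambda>i. cs ! i) (FEx k \<phi>)}"
  proof -
    have "sat M ((\<lambda>i. cs ! i)(k := b)) \<phi> = sat M (\<lambda>i. (cs @ [b]) ! i) \<phi>"
      if "length cs = k" for cs b
      using that p(2) by (intro sat_cong) (auto simp: nth_append)
    then show ?thesis using D by auto
  qed
  moreover have "fv (FEx k \<phi>) \<subseteq> {..<k}" using p(2) by auto
  ultimately have "params (FEx k \<phi>) \<subseteq> B \<and> fv (FEx k \<phi>) \<subseteq> {..<k} \<and>
      {cs. length cs = k \<and> (\<exists>b. cs @ [b] \<in> D)} =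
        {cs. length cs = k \<and> sat M (\<lambda>i. cs ! i) (FEx k \<phi>)}" using p(1) by simp
  then show ?thesis unfolding defset_def by blast
qed

lemma defset_ex:
  "defset M (n + m) B D \<Longrightarrow>
   defset M n B {as. length as = n \<and> (\<exists>bs. length bs = m \<and> as @ bs \<in> D)}"
proof (induction m arbitrary: D)
  case 0
  have "{as. length as = n \<and> (\<exists>bs. length bs = 0 \<and> as @ bs \<in> D)} = D"
    using defset_len[OF 0[simplified]] by auto
  then show ?case using 0 by simp
next
  case (Suc m)
  let ?D = "{cs. length cs = n + m \<and> (\<exists>b. cs @ [b] \<in> D)}"
  have d: "defset M (n + m) B ?D" using defset_ex1[of M "n+m" B D] Suc.prems by simp
  have "{as. length as = n \<and> (\<exists>bs. length bs = Suc m \<and> as @ bs \<in> D)} =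
        {as. length as = n \<and> (\<exists>bs. length bs = m \<and> as @ bs \<in> ?D)}"
  proof (intro Collect_cong iffI)
    fix as assume "length as = n \<and> (\<exists>bs. length bs = Suc m \<and> as @ bs \<in> D)"
    then obtain bs where "length as = n" "length bs = Suc m" "as @ bs \<in> D" by blast
    then obtain cs b where "bs = cs @ [b]" "length cs = m"
      by (metis length_Suc_conv_rev)
    then show "length as = n \<and> (\<exists>bs. length bs = m \<and> as @ bs \<in> ?D)"
      using \<open>as @ bs \<in> D\<close> \<open>length as = n\<close> by (intro conjI exI[of _ cs]) auto
  next
    fix as assume "length as = n \<and> (\<exists>bs. length bs = m \<and> as @ bs \<in> ?D)"
    then obtain bs b where "length as = n" "length bs = m" "as @ bs @ [b] \<in> D" by auto
    then show "length as = n \<and> (\<exists>bs. length bs = Suc m \<and> as @ bs \<in> D)"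
      by (intro conjI exI[of _ "bs @ [b]"]) auto
  qed
  then show ?case using Suc.IH[OF d] by simp
qed

lemma defset_cyl:
  assumes "defset M n B F"
  shows "defset M (n + m) B {as @ bs | as bs. as \<in> F \<and> length bs = m}"
proof -
  obtain \<phi> where p: "params \<phi> \<subseteq> B" "fv \<phi> \<subseteq> {..<n}"
    and F: "F = {as. length as = n \<and> sat M (\<lambda>i. as ! i) \<phi>}"
    using assms unfolding defset_def by blast
  have "{as @ bs | as bs. as \<in> F \<and> length bs = m} =
        {cs. length cs = n + m \<and> sat M (\<lambda>i. cs ! i) \<phi>}"
  proof (intro set_eqI iffI)
    fix cs assume "cs \<in> {as @ bs | as bs. as \<in> F \<and> length bs = m}"
    then obtain as bs where c: "cs = as @ bs" "length as = n" "length bs = m"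
      "sat M (\<lambda>i. as ! i) \<phi>" using F by auto
    have "sat M (\<lambda>i. cs ! i) \<phi> = sat M (\<lambda>i. as ! i) \<phi>"
      using p(2) c by (intro sat_cong) (auto simp: nth_append)
    then show "cs \<in> {cs. length cs = n + m \<and> sat M (\<lambda>i. cs ! i) \<phi>}" using c by auto
  next
    fix cs assume "cs \<in> {cs. length cs = n + m \<and> sat M (\<lambda>i. cs ! i) \<phi>}"
    then have c: "length cs = n + m" "sat M (\<lambda>i. cs ! i) \<phi>" by auto
    have "sat M (\<lambda>i. cs ! i) \<phi> = sat M (\<lambda>i. take n cs ! i) \<phi>"
      using p(2) c by (intro sat_cong) auto
    then show "cs \<in> {as @ bs | as bs. as \<in> F \<and> length bs = m}"
      using c F by (intro CollectI exI[of _ "take n cs"] exI[of _ "drop n cs"]) auto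
  qed
  then show ?thesis unfolding defset_def using p by (intro exI[of _ \<phi>]) auto
qed

lemma defset_shift:
  assumes "defset M m B E"
  shows "defset M (n + m) B {as @ bs | as bs. length as = n \<and> bs \<in> E}"
proof -
  obtain \<phi> where p: "params \<phi> \<subseteq> B" "fv \<phi> \<subseteq> {..<m}"
    and E: "E = {as. length as = m \<and> sat M (\<lambda>i. as ! i) \<phi>}"
    using assms unfolding defset_def by blast
  let ?g = "\<lambda>i::nat. i + n"
  have inj: "inj ?g" by (auto simp: inj_def)
  have s: "sat M (\<lambda>i. cs ! i) (rn ?g \<phi>) = sat M (\<lambda>i. drop n cs ! i) \<phi>"
    if "length cs = n + m" for cs
    using that p(2) by (simp add: sat_rn[OF inj] comp_def add.commute)
  have "{as @ bs | as bs. length as = n \<and> bs \<in> E} =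
        {cs. length cs = n + m \<and> sat M (\<lambda>i. cs ! i) (rn ?g \<phi>)}"
  proof (intro set_eqI iffI)
    fix cs assume "cs \<in> {as @ bs | as bs. length as = n \<and> bs \<in> E}"
    then obtain as bs where c: "cs = as @ bs" "length as = n" "bs \<in> E" by auto
    then show "cs \<in> {cs. length cs = n + m \<and> sat M (\<lambda>i. cs ! i) (rn ?g \<phi>)}"
      using s[of cs] E by auto
  next
    fix cs assume "cs \<in> {cs. length cs = n + m \<and> sat M (\<lambda>i. cs ! i) (rn ?g \<phi>)}"
    then show "cs \<in> {as @ bs | as bs. length as = n \<and> bs \<in> E}"
      using s[of cs] E by (intro CollectI exI[of _ "take n cs"] exI[of _ "drop n cs"]) auto
  qed
  moreover have "fv (rn ?g \<phi>) \<subseteq> {..<n + m}" using p(2) by (auto simp: fv_rn[OF inj])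
  moreover have "params (rn ?g \<phi>) \<subseteq> B" using p(1) by (simp add: params_rn)
  ultimately show ?thesis unfolding defset_def by blast
qed

lemma keisler_diff:
  assumes k: "keisler M N B \<omega>" and d: "defset M N B D" and e: "defset M N B E"
  shows "\<omega> D = \<omega> (D \<inter> E) + \<omega> (D - E)"
proof -
  have add: "\<And>D E. defset M N B D \<Longrightarrow> defset M N B E \<Longrightarrow> D \<inter> E = {} \<Longrightarrow>
      \<omega> (D \<union> E) = \<omega> D + \<omega> E" using k unfolding keisler_def by blast
  have "D = (D \<inter> E) \<union> (D - E)" by auto
  moreover have "(D \<inter> E) \<inter> (D - E) = {}" by auto
  ultimately show ?thesis using add[OF defset_int[OF d e] defset_diff[OF d e]] by simp
qed

lemma keisler_full:
  assumes k: "keisler M N B \<omega>" and d: "defset M N B D" and g: "defset M N B G"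
    and w: "\<omega> G = 1"
  shows "\<omega> D = \<omega> (D \<inter> G)"
proof -
  let ?U = "{cs. length cs = N}"
  have u: "defset M N B ?U" by (rule defset_univ)
  have "\<omega> ?U = \<omega> (?U \<inter> G) + \<omega> (?U - G)" by (rule keisler_diff[OF k u g])
  moreover have "?U \<inter> G = G" using defset_len[OF g] by auto
  ultimately have z: "\<omega> (?U - G) = 0" using k w unfolding keisler_def by simp
  have "(?U - G) \<inter> D = D - G" using defset_len[OF d] by auto
  then have "\<omega> (?U - G) = \<omega> (D - G) + \<omega> ((?U - G) - D)"
    using keisler_diff[OF k defset_diff[OF u g] d] by simp
  moreover have "0 \<le> \<omega> ((?U - G) - D)"
    using k defset_diff[OF defset_diff[OF u g] d] unfolding keisler_def by blast
  moreover have "0 \<le> \<omega> (D - G)" using k defset_diff[OF d g] unfolding keisler_def by blast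
  ultimately have "\<omega> (D - G) = 0" using z by linarith
  then show ?thesis using keisler_diff[OF k d g] by simp
qed

lemma keisler_nonneg: "keisler M k B \<mu> \<Longrightarrow> defset M k B D \<Longrightarrow> 0 \<le> \<mu> D"
  unfolding keisler_def by blast

lemma keisler_one: "keisler M k B \<mu> \<Longrightarrow> \<mu> {cs. length cs = k} = 1"
  unfolding keisler_def by blast

lemma keisler_add: "keisler M k B \<mu> \<Longrightarrow> defset M k B D \<Longrightarrow> defset M k B E \<Longrightarrow>
   D \<inter> E = {} \<Longrightarrow> \<mu> (D \<union> E) = \<mu> D + \<mu> E"
  unfolding keisler_def by blast

theorem proposition3p10:
  fixes M :: "('f, 'r, 'a) struc" and K :: "'k set"
    and n m :: nat and A :: "'a set"
    and \<mu> :: "'a list set \<Rightarrow> real" and f :: "'a list \<Rightarrow> 'a list"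
  assumes "monster M K"
    and "small K A"
    and "keisler M n UNIV \<mu>"
    and "deffun M n m A f"
  shows "geqE M n m A \<mu> (pushforward n f \<mu>)"
proof -
  note mu = assms(3)
  have flen: "\<And>as. length as = n \<Longrightarrow> length (f as) = m" using assms(4) unfolding deffun_def by blast
  let ?G = "{as @ f as | as. length as = n}"
  have G: "defset M (n + m) A ?G" using assms(4) unfolding deffun_def by blast
  define pre where "pre D = {as. length as = n \<and> as @ f as \<in> D}" for D
  have preG: "pre D = {as. length as = n \<and> (\<exists>bs. length bs = m \<and> as @ bs \<in> ?G \<inter> D)}" for D
    unfolding pre_def
  proof (intro Collect_cong iffI)
    fix as assume h: "length as = n \<and> as @ f as \<in> D"
    have "as @ f as \<in> ?G" using h by blast
    then show "length as = n \<and> (\<exists>bs. length bs = m \<and> as @ bs \<in> ?G \<inter> D)"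
      using h flen by blast
  next
    fix as assume h: "length as = n \<and> (\<exists>bs. length bs = m \<and> as @ bs \<in> ?G \<inter> D)"
    then obtain bs where b: "length as = n" "as @ bs \<in> ?G" "as @ bs \<in> D" by blast
    from b(2) obtain as' where c: "as @ bs = as' @ f as'" "length as' = n" by blast
    have "as = as' \<and> bs = f as'" using c b(1) by (simp add: append_eq_append_conv)
    then show "length as = n \<and> as @ f as \<in> D" using b by simp
  qed
  have P: "defset M n UNIV (pre D)" if "defset M (n + m) B D" "A \<subseteq> B" for D B
  proof -
    have "defset M (n + m) UNIV (?G \<inter> D)"
      using defset_int[OF defset_mono[OF G] defset_mono[OF that(1)]] by blast
    then show ?thesis unfolding preG by (rule defset_ex)
  qed
  define lam where "lam D = \<mu> (pre D)" for D
  have klam: "keisler M (n + m) A lam"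
    unfolding keisler_def
  proof (intro conjI allI impI)
    fix D assume "defset M (n + m) A D"
    then show "0 \<le> lam D" using keisler_nonneg[OF mu P[of A D]] unfolding lam_def by blast
  next
    have "pre {as. length as = n + m} = {as. length as = n}" unfolding pre_def using flen by auto
    then show "lam {as. length as = n + m} = 1" using keisler_one[OF mu] unfolding lam_def by simp
  next
    fix D E assume a: "defset M (n + m) A D \<and> defset M (n + m) A E \<and> D \<inter> E = {}"
    have "pre (D \<union> E) = pre D \<union> pre E" "pre D \<inter> pre E = {}" using a unfolding pre_def by auto
    then show "lam (D \<union> E) = lam D + lam E"
      using keisler_add[OF mu P[of A D] P[of A E]] a unfolding lam_def by simp
  qed
  have pix: "pi_x n m lam D = \<mu> D" if "defset M n A D" for D
  proof -
    have "pre {as @ bs | as bs. as \<in> D \<and> length bs = m} = D"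
      unfolding pre_def
    proof (intro set_eqI iffI)
      fix as assume "as \<in> {as. length as = n \<and> as @ f as \<in> {as @ bs | as bs. as \<in> D \<and> length bs = m}}"
      then obtain as' bs where c: "length as = n" "as @ f as = as' @ bs" "as' \<in> D" by blast
      have "length as' = n" using defset_len[OF that c(3)] .
      then have "as = as'" using c by (simp add: append_eq_append_conv)
      then show "as \<in> D" using c by simp
    next
      fix as assume h: "as \<in> D"
      then have "length as = n" using defset_len[OF that] by blast
      then show "as \<in> {as. length as = n \<and> as @ f as \<in> {as @ bs | as bs. as \<in> D \<and> length bs = m}}"
        using h flen by blast
    qed
    then show ?thesis unfolding pi_x_def lam_def by simp
  qed
  show ?thesis unfolding geqE_def
  proof (intro exI[of _ lam] conjI allI impI klam)
    fix D assume "defset M n A D" then show "pi_x n m lam D = \<mu> D" by (rule pix)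
  next
    fix \<omega> E
    assume a: "keisler M (n + m) UNIV \<omega> \<and> (\<forall>D. defset M (n + m) A D \<longrightarrow> \<omega> D = lam D) \<and>
              (\<forall>D. defset M n UNIV D \<longrightarrow> pi_x n m \<omega> D = \<mu> D)"
      and e: "defset M m UNIV E"
    have k: "keisler M (n + m) UNIV \<omega>" using a by blast
    have "pre ?G = {as. length as = n}" unfolding pre_def by auto
    moreover have "\<omega> ?G = lam ?G" using a G by blast
    ultimately have wG: "\<omega> ?G = 1" using keisler_one[OF mu] unfolding lam_def by simp
    have GU: "defset M (n + m) UNIV ?G" using defset_mono[OF G] by blast
    let ?Y = "{as @ bs | as bs. length as = n \<and> bs \<in> E}"
    have Y: "defset M (n + m) UNIV ?Y" by (rule defset_shift[OF e])
    let ?F = "{as. length as = n \<and> f as \<in> E}"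
    have "?F = pre ?Y" unfolding pre_def
    proof (intro Collect_cong iffI)
      fix as assume h: "length as = n \<and> f as \<in> E"
      then show "length as = n \<and> as @ f as \<in> ?Y" by blast
    next
      fix as assume h: "length as = n \<and> as @ f as \<in> ?Y"
      then obtain as' bs where c: "as @ f as = as' @ bs" "length as' = n" "bs \<in> E" by blast
      have "length as = length as'" using c h by simp
      then have "f as = bs" using c(1) append_eq_append_conv[of as as' "f as" bs] by blast
      then show "length as = n \<and> f as \<in> E" using h c by simp
    qed
    then have F: "defset M n UNIV ?F" using P[OF Y] by simp
    let ?X = "{as @ bs | as bs. as \<in> ?F \<and> length bs = m}"
    have X: "defset M (n + m) UNIV ?X" by (rule defset_cyl[OF F])
    have piF: "pi_x n m \<omega> ?F = \<mu> ?F" using a F by blast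
    have "?Y \<inter> ?G = ?X \<inter> ?G"
    proof (intro set_eqI iffI)
      fix cs assume h: "cs \<in> ?Y \<inter> ?G"
      then have h1: "cs \<in> ?Y" and h2: "cs \<in> ?G" by auto
      from h1 obtain as bs where c: "cs = as @ bs" "length as = n" "bs \<in> E" by blast
      from h2 obtain as' where c': "cs = as' @ f as'" "length as' = n" by blast
      have "length as = length as'" using c c' by simp
      moreover have "as @ bs = as' @ f as'" using c(1) c'(1) by simp
      ultimately have "as = as' \<and> bs = f as'"
        using append_eq_append_conv[of as as' bs "f as'"] by blast
      then have "cs \<in> ?X" using c flen
        by (intro CollectI exI[of _ as] exI[of _ bs]) auto
      then show "cs \<in> ?X \<inter> ?G" using h2 by simp
    next
      fix cs assume h: "cs \<in> ?X \<inter> ?G"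
      then have h1: "cs \<in> ?X" and h2: "cs \<in> ?G" by auto
      from h1 obtain as bs where c: "cs = as @ bs" "as \<in> ?F" "length bs = m" by blast
      from h2 obtain as' where c': "cs = as' @ f as'" "length as' = n" by blast
      have "length as = length as'" using c c' by simp
      moreover have "as @ bs = as' @ f as'" using c(1) c'(1) by simp
      ultimately have "as = as' \<and> bs = f as'"
        using append_eq_append_conv[of as as' bs "f as'"] by blast
      then have "cs \<in> ?Y" using c
        by (intro CollectI exI[of _ as] exI[of _ bs]) auto
      then show "cs \<in> ?Y \<inter> ?G" using h2 by simp
    qed
    then have "\<omega> ?Y = \<omega> ?X"
      using keisler_full[OF k Y GU wG] keisler_full[OF k X GU wG] by simp
    also have "\<omega> ?X = \<mu> ?F" using piF unfolding pi_x_def .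
    finally show "pi_y n m \<omega> E = pushforward n f \<mu> E"
      unfolding pi_y_def pushforward_def by simp
  qed
qed

end
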